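(* The mapping $\Delta$ is a bijection between covered maps and left-connected oriented maps.
   Context: Permutations are composed right to left. A (rooted) map is a triple $M=(H,\sigma,\alpha)$ with $H$ a finite set of half-edges, $\alpha$ a fixed-point-free involution, $\sigma$ a permutation, $\langle\sigma,\alpha\rangle$ transitive on $H$, and a root $r\in H$; maps are considered up to root-preserving relabelling. Cycles of $\sigma$, $\alpha$, $\phi=\sigma\alpha$ are vertices, edges, faces. For $S\subseteq H$ and a permutation $\pi$, $\pi_{|S}$ is the permutation of $S$ obtained by erasing elements not in $S$ from the cycles of $\pi$. A spanned map $(M,S)$ has $S\subseteq H$ stable by $\alpha$; it is a covered map if $(S,\sigma_{|S},\alpha_{|S})$ is a connecting unicellular map ($\sigma_{|S},\alpha_{|S}$ transitive on $S$, $S$ meets every cycle of $\sigma$ — except $S=\emptyset$ is allowed if $M$ has one vertex — and $\sigma_{|S}\alpha_{|S}$ is cyclic). Its motion function $\theta(h)=\sigma\alpha(h)$ for $h\in S$, $\theta(h)=\sigma(h)$ otherwise, is cyclic for covered maps, and the appearance order is $r\prec_S\theta(r)\prec_S\cdots\prec_S\theta^{|H|-1}(r)$. An oriented map is $(M,(I,O))$ with $H=I\uplus O$ and $\alpha(I)=O$. $\Delta(M,S)=(M,(I,O))$ with $I=\{h\in S:\alpha(h)\prec_S h\}\cup\{h\notin S:h\prec_S\alpha(h)\}$, $O=H\setminus I$. Let $h_0=r$ be the root. A left-path is a sequence $h_1,\dots,h_k$ of half-edges of $I$ such that for each $j=1,\dots,k$ there is an integer $q_j>0$ with $h_{j-1}=\sigma^{q_j}(\alpha(h_j))$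 and $\sigma^p(\alpha(h_j))\in O$ for all $p=0,\dots,q_j-1$. The oriented map is left-connected if every $h\in I$ is the last element $h_k$ of some left-path. *)

theory Defs
  imports "HOL-Combinatorics.Permutations"
begin

text \<open>A rooted map on a finite set H of half-edges: sigma a permutation of H,
  alpha a fixed-point-free involution of H, the group generated by sigma and
  alpha transitive on H (for finite H this is reachability under sigma and alpha),
  and a root r in H.\<close>

definition gen_rel :: "('a \<Rightarrow> 'a) \<Rightarrow> ('a \<Rightarrow> 'a) \<Rightarrow> ('a \<times> 'a) set" where
  "gen_rel f g = {(x, f x) | x. True} \<union> {(x, g x) | x. True}"

definition transitive_on :: "'a set \<Rightarrow> ('a \<Rightarrow> 'a) \<Rightarrow> ('a \<Rightarrow> 'a) \<Rightarrow> bool" where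
  "transitive_on S f g \<longleftrightarrow> (\<forall>x\<in>S. \<forall>y\<in>S. (x, y) \<in> (gen_rel f g)\<^sup>*)"

definition cyclic_on :: "'a set \<Rightarrow> ('a \<Rightarrow> 'a) \<Rightarrow> bool" where
  "cyclic_on S f \<longleftrightarrow> (\<forall>x\<in>S. \<forall>y\<in>S. \<exists>k. (f ^^ k) x = y)"

definition rooted_map :: "'a set \<Rightarrow> ('a \<Rightarrow> 'a) \<Rightarrow> ('a \<Rightarrow> 'a) \<Rightarrow> 'a \<Rightarrow> bool" where
  "rooted_map H \<sigma> \<alpha> r \<longleftrightarrow>
     finite H \<and> \<sigma> permutes H \<and> \<alpha> permutes H \<and>
     (\<forall>h\<in>H. \<alpha> h \<noteq> h \<and> \<alpha> (\<alpha> h) = h) \<and>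
     transitive_on H \<sigma> \<alpha> \<and> r \<in> H"

text \<open>Restriction pi_{|S}: erase elements not in S from the cycles of pi.\<close>
definition restr :: "('a \<Rightarrow> 'a) \<Rightarrow> 'a set \<Rightarrow> 'a \<Rightarrow> 'a" where
  "restr \<pi> S h = (if h \<in> S then (\<pi> ^^ (LEAST k. 0 < k \<and> (\<pi> ^^ k) h \<in> S)) h else h)"

definition connecting_unicellular ::
  "'a set \<Rightarrow> ('a \<Rightarrow> 'a) \<Rightarrow> ('a \<Rightarrow> 'a) \<Rightarrow> 'a set \<Rightarrow> bool" where
  "connecting_unicellular H \<sigma> \<alpha> S \<longleftrightarrow>
     transitive_on S (restr \<sigma> S) (restr \<alpha> S) \<and>
     ((\<forall>h\<in>H. \<exists>k. (\<sigma> ^^ k) h \<in> S) \<or> (S = {} \<and> cyclic_on H \<sigma>)) \<and>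
     cyclic_on S (restr \<sigma> S \<circ> restr \<alpha> S)"

definition covered_map :: "'a set \<Rightarrow> ('a \<Rightarrow> 'a) \<Rightarrow> ('a \<Rightarrow> 'a) \<Rightarrow> 'a \<Rightarrow> 'a set \<Rightarrow> bool" where
  "covered_map H \<sigma> \<alpha> r S \<longleftrightarrow>
     S \<subseteq> H \<and> (\<forall>h\<in>S. \<alpha> h \<in> S) \<and> connecting_unicellular H \<sigma> \<alpha> S"

definition motion :: "('a \<Rightarrow> 'a) \<Rightarrow> ('a \<Rightarrow> 'a) \<Rightarrow> 'a set \<Rightarrow> 'a \<Rightarrow> 'a" where
  "motion \<sigma> \<alpha> S h = (if h \<in> S then \<sigma> (\<alpha> h) else \<sigma> h)"

definition appearance_index :: "('a \<Rightarrow> 'a) \<Rightarrow> ('a \<Rightarrow> 'a) \<Rightarrow> 'a \<Rightarrow> 'a set \<Rightarrow> 'a \<Rightarrow> nat" where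
  "appearance_index \<sigma> \<alpha> r S h = (LEAST k. (motion \<sigma> \<alpha> S ^^ k) r = h)"

definition appears_before :: "('a \<Rightarrow> 'a) \<Rightarrow> ('a \<Rightarrow> 'a) \<Rightarrow> 'a \<Rightarrow> 'a set \<Rightarrow> 'a \<Rightarrow> 'a \<Rightarrow> bool" where
  "appears_before \<sigma> \<alpha> r S h h' \<longleftrightarrow>
     appearance_index \<sigma> \<alpha> r S h < appearance_index \<sigma> \<alpha> r S h'"

text \<open>The mapping Delta: returns the set I of the orientation (I, O), O = H - I.\<close>
definition Delta :: "'a set \<Rightarrow> ('a \<Rightarrow> 'a) \<Rightarrow> ('a \<Rightarrow> 'a) \<Rightarrow> 'a \<Rightarrow> 'a set \<Rightarrow> 'a set" where
  "Delta H \<sigma> \<alpha> r S =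
     {h \<in> S. appears_before \<sigma> \<alpha> r S (\<alpha> h) h} \<union>
     {h \<in> H - S. appears_before \<sigma> \<alpha> r S h (\<alpha> h)}"

definition oriented_map :: "'a set \<Rightarrow> ('a \<Rightarrow> 'a) \<Rightarrow> 'a set \<Rightarrow> bool" where
  "oriented_map H \<alpha> I \<longleftrightarrow> I \<subseteq> H \<and> \<alpha> ` I = H - I"

definition left_step :: "'a set \<Rightarrow> ('a \<Rightarrow> 'a) \<Rightarrow> ('a \<Rightarrow> 'a) \<Rightarrow> 'a set \<Rightarrow> 'a \<Rightarrow> 'a \<Rightarrow> bool" where
  "left_step H \<sigma> \<alpha> I prev h \<longleftrightarrow>
     (\<exists>q>0. prev = (\<sigma> ^^ q) (\<alpha> h) \<and> (\<forall>p<q. (\<sigma> ^^ p) (\<alpha> h) \<in> H - I))"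

definition left_path :: "'a set \<Rightarrow> ('a \<Rightarrow> 'a) \<Rightarrow> ('a \<Rightarrow> 'a) \<Rightarrow> 'a \<Rightarrow> 'a set \<Rightarrow> 'a list \<Rightarrow> bool" where
  "left_path H \<sigma> \<alpha> r I hs \<longleftrightarrow>
     hs \<noteq> [] \<and> set hs \<subseteq> I \<and>
     (\<forall>j < length hs. left_step H \<sigma> \<alpha> I (if j = 0 then r else hs ! (j - 1)) (hs ! j))"

definition left_connected :: "'a set \<Rightarrow> ('a \<Rightarrow> 'a) \<Rightarrow> ('a \<Rightarrow> 'a) \<Rightarrow> 'a \<Rightarrow> 'a set \<Rightarrow> bool" where
  "left_connected H \<sigma> \<alpha> r I \<longleftrightarrow>
     (\<forall>h\<in>I. \<exists>hs. left_path H \<sigma> \<alpha> r I hs \<and> last hs = h)"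

end

theory Submission
  imports Defs
begin


lemma funpow_Suc_apply: "(f ^^ Suc k) x = f ((f ^^ k) x)" by simp

lemma funpow_Suc_apply2: "(f ^^ Suc k) x = (f ^^ k) (f x)"
  by (simp add: funpow_Suc_right del: funpow.simps)

lemma cyclic_onD: "cyclic_on S f \<Longrightarrow> x \<in> S \<Longrightarrow> y \<in> S \<Longrightarrow> \<exists>k. (f ^^ k) x = y"
  unfolding cyclic_on_def by blast

lemma funpow_period:
  assumes "(f ^^ m) x = x"
  shows "(f ^^ (m * q)) x = x"
proof (induction q)
  case 0 then show ?case by simp
next
  case (Suc q)
  have "(f ^^ (m * Suc q)) x = (f ^^ m) ((f ^^ (m * q)) x)"
    by (simp add: funpow_add add.commute)
  then show ?case using Suc assms by simp
qed

lemma funpow_mod: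
  assumes "(f ^^ m) x = x"
  shows "(f ^^ k) x = (f ^^ (k mod m)) x"
proof -
  have "k = k mod m + m * (k div m)" by simp
  then have "(f ^^ k) x = (f ^^ (k mod m)) ((f ^^ (m * (k div m))) x)"
    by (metis comp_apply funpow_add)
  then show ?thesis using funpow_period[OF assms] by simp
qed

lemma perm_period:
  assumes p: "f permutes H" and fin: "finite H" and x: "x \<in> H"
  shows "\<exists>m>0. m \<le> card H \<and> (f ^^ m) x = x"
proof -
  define g where "g k = (f ^^ k) x" for k
  have sub: "g ` {..card H} \<subseteq> H"
  proof
    fix y assume "y \<in> g ` {..card H}"
    then obtain k where "y = (f ^^ k) x" unfolding g_def by auto
    moreover have "(f ^^ k) x \<in> H" for k
      by (induction k) (use x permutes_in_image[OF p] in auto)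
    ultimately show "y \<in> H" by simp
  qed
  have "\<not> inj_on g {..card H}"
  proof
    assume "inj_on g {..card H}"
    then have "card (g ` {..card H}) = card {..card H}" by (rule card_image)
    moreover have "card (g ` {..card H}) \<le> card H" by (rule card_mono[OF fin sub])
    ultimately show False by simp
  qed
  then obtain a b where ab: "a \<le> card H" "b \<le> card H" "a \<noteq> b" "g a = g b"
    unfolding inj_on_def by auto
  have key: "(f ^^ (b - a)) x = x \<and> 0 < b - a \<and> b - a \<le> card H"
    if "a < b" "b \<le> card H" "g a = g b" for a b
  proof -
    have "(f ^^ b) x = (f ^^ a) ((f ^^ (b - a)) x)"
      using that by (metis comp_apply funpow_add le_add_diff_inverse less_imp_le)
    then have "(f ^^ a) ((f ^^ (b - a)) x) = (f ^^ a) x" using that unfolding g_def by simp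
    moreover have "inj (f ^^ a)" using permutes_inj[OF p] by simp
    ultimately show ?thesis using that by (auto dest: injD)
  qed
  show ?thesis
  proof (cases "a < b")
    case True then show ?thesis using key ab by blast
  next
    case False then have "b < a" using ab by simp
    then show ?thesis using key ab by (metis)
  qed
qed

lemma perm_funpow_in:
  assumes "f permutes H" "x \<in> H" shows "(f ^^ k) x \<in> H"
  by (induction k) (use assms permutes_in_image[OF assms(1)] in auto)

lemma perm_least_bound:
  assumes p: "f permutes H" and fin: "finite H" and x: "x \<in> H" and k: "(f ^^ k) x = y"
  shows "(LEAST k. (f ^^ k) x = y) < card H \<and> (f ^^ (LEAST k. (f ^^ k) x = y)) x = y"
proof -
  obtain m where m: "m > 0" "m \<le> card H" "(f ^^ m) x = x" using perm_period[OF p fin x] by blast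
  have "(f ^^ (k mod m)) x = y" using funpow_mod[OF m(3)] k by simp
  then have "(LEAST k. (f ^^ k) x = y) \<le> k mod m" by (rule Least_le)
  moreover have "k mod m < m" using m by simp
  moreover have "(f ^^ (LEAST k. (f ^^ k) x = y)) x = y" using k by (rule LeastI)
  ultimately show ?thesis using m(2) by linarith
qed

lemma perm_back:
  assumes p: "f permutes H" and fin: "finite H" and x: "x \<in> H" and k: "f y = (f ^^ k) x"
  shows "\<exists>j. y = (f ^^ j) x"
proof -
  obtain m where m: "m > 0" "m \<le> card H" "(f ^^ m) x = x" using perm_period[OF p fin x] by blast
  have eq: "(f ^^ (k + m)) x = (f ^^ k) x" using m(3) by (simp add: funpow_add)
  have "f ((f ^^ (k + m - 1)) x) = (f ^^ (k + m)) x"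
    using m(1) by (metis Suc_diff_1 add_gr_0 comp_apply funpow.simps(2))
  then have "f y = f ((f ^^ (k + m - 1)) x)" using eq k by simp
  then show ?thesis using permutes_inj[OF p] by (auto dest: injD)
qed

lemma perm_cyclic:
  assumes p: "f permutes H" and fin: "finite H" and r: "r \<in> H"
    and all: "\<forall>y\<in>H. \<exists>k. (f ^^ k) r = y"
  shows "cyclic_on H f"
  unfolding cyclic_on_def
proof (intro ballI)
  fix x y assume xy: "x \<in> H" "y \<in> H"
  obtain a where a: "(f ^^ a) r = x" using all xy by blast
  obtain b where b: "(f ^^ b) r = y" using all xy by blast
  obtain m where m: "m > 0" "(f ^^ m) r = r" using perm_period[OF p fin r] by blast
  have "(f ^^ (b + m * a - a)) x = (f ^^ (b + m * a)) r"
  proof -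
    have "a \<le> m * a" using m by simp
    then have "b + m * a = (b + m * a - a) + a" by linarith
    then show ?thesis using a by (metis comp_apply funpow_add)
  qed
  also have "\<dots> = (f ^^ b) ((f ^^ (m * a)) r)" by (simp add: funpow_add)
  also have "\<dots> = y" using funpow_period[OF m(2)] b by simp
  finally show "\<exists>k. (f ^^ k) x = y" by blast
qed




locale RM =
  fixes H :: "'a set" and \<sigma> \<alpha> :: "'a \<Rightarrow> 'a" and r :: 'a
  assumes RM: "rooted_map H \<sigma> \<alpha> r"
begin

lemma fin: "finite H" and sig: "\<sigma> permutes H" and alp: "\<alpha> permutes H"
  and afix: "h \<in> H \<Longrightarrow> \<alpha> h \<noteq> h" and ainv: "h \<in> H \<Longrightarrow> \<alpha> (\<alpha> h) = h"
  and rH: "r \<in> H"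
  using RM unfolding rooted_map_def by auto

lemma aH: "h \<in> H \<Longrightarrow> \<alpha> h \<in> H" using permutes_in_image[OF alp] by simp
lemma sH: "h \<in> H \<Longrightarrow> \<sigma> h \<in> H" using permutes_in_image[OF sig] by simp
lemma spH: "h \<in> H \<Longrightarrow> (\<sigma> ^^ k) h \<in> H" using perm_funpow_in[OF sig] by simp

definition stable :: "'a set \<Rightarrow> bool" where
  "stable S \<longleftrightarrow> S \<subseteq> H \<and> (\<forall>h\<in>S. \<alpha> h \<in> S)"

abbreviation th :: "'a set \<Rightarrow> 'a \<Rightarrow> 'a" where "th S \<equiv> motion \<sigma> \<alpha> S"
abbreviation phi :: "'a set \<Rightarrow> 'a \<Rightarrow> 'a" where "phi S \<equiv> restr \<sigma> S \<circ> restr \<alpha> S"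

lemma th_perm:
  assumes st: "stable S" shows "th S permutes H"
proof -
  define g where "g h = (if h \<in> S then \<alpha> h else h)" for h
  have S: "S \<subseteq> H" "\<And>h. h \<in> S \<Longrightarrow> \<alpha> h \<in> S" using st unfolding stable_def by auto
  have gp: "g permutes H"
  proof (rule inj_imp_permutes[OF _ fin])
    show "inj_on g H"
    proof (rule inj_onI)
      fix x y assume xy: "x \<in> H" "y \<in> H" "g x = g y"
      show "x = y"
        using xy S ainv unfolding g_def by (metis (full_types))
    qed
    show "\<And>x. x \<in> H \<Longrightarrow> g x \<in> H" using aH unfolding g_def by auto
    show "\<And>i. i \<notin> H \<Longrightarrow> g i = i" using S unfolding g_def by auto
  qed
  have "th S = \<sigma> \<circ> g" by (rule ext) (simp add: motion_def g_def)
  then show ?thesis using permutes_compose[OF gp sig] by simp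
qed

lemma thH: "stable S \<Longrightarrow> h \<in> H \<Longrightarrow> th S h \<in> H"
  using permutes_in_image[OF th_perm] by simp
lemma thpH: "stable S \<Longrightarrow> h \<in> H \<Longrightarrow> (th S ^^ k) h \<in> H"
  using perm_funpow_in[OF th_perm] by simp
lemma th_inj: "stable S \<Longrightarrow> inj (th S)"
  using permutes_inj[OF th_perm] by simp

lemma seg:
  assumes "s \<in> S" "\<forall>i. 0 < i \<and> i \<le> j \<longrightarrow> (\<sigma> ^^ i) (\<alpha> s) \<notin> S"
  shows "(th S ^^ Suc j) s = (\<sigma> ^^ Suc j) (\<alpha> s)"
  using assms
proof (induction j)
  case 0 then show ?case by (simp add: motion_def)
next
  case (Suc j)
  then have "(th S ^^ Suc j) s = (\<sigma> ^^ Suc j) (\<alpha> s)" by auto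
  moreover have "(\<sigma> ^^ Suc j) (\<alpha> s) \<notin> S" using Suc.prems by blast
  moreover have "(th S ^^ Suc (Suc j)) s = th S ((th S ^^ Suc j) s)" by simp
  moreover have "th S x = \<sigma> x" if "x \<notin> S" for x using that by (simp add: motion_def)
  ultimately show ?case by simp
qed

lemma restr_alpha: "stable S \<Longrightarrow> s \<in> S \<Longrightarrow> restr \<alpha> S s = \<alpha> s"
proof -
  assume st: "stable S" and s: "s \<in> S"
  have "(LEAST k. 0 < k \<and> (\<alpha> ^^ k) s \<in> S) = 1"
    by (rule Least_equality) (use st s in \<open>auto simp: stable_def\<close>)
  then show ?thesis using s by (simp add: restr_def)
qed

lemma sig_return:
  assumes "x \<in> H" shows "\<exists>m>0. (\<sigma> ^^ m) x = x"
  using perm_period[OF sig fin assms] by blast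

lemma phi_th:
  assumes st: "stable S" and s: "s \<in> S"
  shows "\<exists>L>0. (th S ^^ L) s = phi S s \<and> (\<forall>i. 0 < i \<and> i < L \<longrightarrow> (th S ^^ i) s \<notin> S)
          \<and> phi S s \<in> S"
proof -
  have as: "\<alpha> s \<in> S" "\<alpha> s \<in> H" using st s unfolding stable_def by auto
  define P where "P k \<longleftrightarrow> 0 < k \<and> (\<sigma> ^^ k) (\<alpha> s) \<in> S" for k
  obtain m where m: "m > 0" "(\<sigma> ^^ m) (\<alpha> s) = \<alpha> s" using sig_return[OF as(2)] by blast
  have Pm: "P m" using m as unfolding P_def by simp
  define L where "L = (LEAST k. P k)"
  have PL: "P L" unfolding L_def using Pm by (rule LeastI)
  have notP: "\<not> P i" if "i < L" for i using that not_less_Least unfolding L_def by blast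
  have phis: "phi S s = (\<sigma> ^^ L) (\<alpha> s)"
    using as restr_alpha[OF st s] unfolding restr_def P_def L_def by simp
  have L0: "L > 0" using PL unfolding P_def by simp
  have segi: "(th S ^^ i) s = (\<sigma> ^^ i) (\<alpha> s)" if i0: "0 < i" "i \<le> L" for i
  proof -
    obtain j where j: "i = Suc j" using i0(1) gr0_implies_Suc by blast
    have "(\<sigma> ^^ i') (\<alpha> s) \<notin> S" if i1: "0 < i'" "i' \<le> j" for i'
    proof -
      have "i' < L" using i1 j i0 by simp
      then have "\<not> P i'" by (rule notP)
      then show ?thesis using i1(1) unfolding P_def by simp
    qed
    then have "\<forall>i'. 0 < i' \<and> i' \<le> j \<longrightarrow> (\<sigma> ^^ i') (\<alpha> s) \<notin> S" by blast
    then show ?thesis using seg[OF s] j by simp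
  qed
  show ?thesis
  proof (intro exI conjI allI impI)
    show "0 < L" by fact
    show "(th S ^^ L) s = phi S s" using segi[OF L0] phis by simp
    show "phi S s \<in> S" using PL phis unfolding P_def by simp
    fix i assume "0 < i \<and> i < L"
    then show "(th S ^^ i) s \<notin> S" using segi notP unfolding P_def by auto
  qed
qed

lemma phi_in: "stable S \<Longrightarrow> s \<in> S \<Longrightarrow> phi S s \<in> S"
  using phi_th by blast

lemma th_empty: "th {} = \<sigma>" by (rule ext) (simp add: motion_def)

lemma back_seg:
  assumes "y \<in> S" "(\<sigma> ^^ M) y = h" "h \<notin> S" "stable S"
  shows "\<exists>s\<in>S. \<exists>j. h = (\<sigma> ^^ Suc j) (\<alpha> s) \<and> (\<forall>i. 0 < i \<and> i \<le> j \<longrightarrow> (\<sigma> ^^ i) (\<alpha> s) \<notin> S)"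
  using assms
proof (induction M arbitrary: h)
  case 0 then show ?case by simp
next
  case (Suc M)
  define h' where "h' = (\<sigma> ^^ M) y"
  have hh: "h = \<sigma> h'" using Suc.prems unfolding h'_def by simp
  show ?case
  proof (cases "h' \<in> S")
    case True
    then have "\<alpha> h' \<in> S" "\<alpha> (\<alpha> h') = h'" using Suc.prems ainv unfolding stable_def by auto
    then show ?thesis using hh by (intro bexI[of _ "\<alpha> h'"] exI[of _ 0]) auto
  next
    case False
    then obtain s j where sj: "s \<in> S" "h' = (\<sigma> ^^ Suc j) (\<alpha> s)"
      "\<forall>i. 0 < i \<and> i \<le> j \<longrightarrow> (\<sigma> ^^ i) (\<alpha> s) \<notin> S"
      using Suc.IH[of h'] Suc.prems unfolding h'_def by blast
    show ?thesis
    proof (intro bexI[of _ s] exI[of _ "Suc j"] conjI allI impI)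
      show "h = (\<sigma> ^^ Suc (Suc j)) (\<alpha> s)" using hh sj by simp
      fix i assume "0 < i \<and> i \<le> Suc j"
      then show "(\<sigma> ^^ i) (\<alpha> s) \<notin> S" using sj False by (cases "i = Suc j") auto
    qed (use sj in auto)
  qed
qed

lemma covered_cyclic:
  assumes cov: "covered_map H \<sigma> \<alpha> r S"
  shows "stable S \<and> cyclic_on H (th S)"
proof -
  have st: "stable S" using cov unfolding covered_map_def stable_def by auto
  have cu: "connecting_unicellular H \<sigma> \<alpha> S" using cov unfolding covered_map_def by auto
  have cyc: "cyclic_on S (phi S)" using cu unfolding connecting_unicellular_def by auto
  consider (A) "S = {} \<and> cyclic_on H \<sigma>" | (B) "\<forall>h\<in>H. \<exists>k. (\<sigma> ^^ k) h \<in> S"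
    using cu unfolding connecting_unicellular_def by auto
  then show ?thesis
  proof cases
    case A then show ?thesis using st th_empty by simp
  next
    case B
    obtain s0 where s0: "s0 \<in> S" using B rH by blast
    have orb_trans: "\<exists>c. (th S ^^ c) s0 = z" if "(th S ^^ a) s0 = y" "(th S ^^ b) y = z" for a b y z
      using that by (intro exI[of _ "b + a"]) (simp add: funpow_add)
    have phik: "phi S ^^ k \<in> S \<rightarrow> S" "\<exists>c. (th S ^^ c) s0 = (phi S ^^ k) s0" for k
    proof -
      show "phi S ^^ k \<in> S \<rightarrow> S"
        by (induction k) (use phi_in[OF st] in auto)
      show "\<exists>c. (th S ^^ c) s0 = (phi S ^^ k) s0"
      proof (induction k)
        case 0 then show ?case by (intro exI[of _ 0]) simp
      next
        case (Suc k)
        have "(phi S ^^ k) s0 \<in> S"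
          by (induction k) (use phi_in[OF st] s0 in auto)
        then obtain L where L: "(th S ^^ L) ((phi S ^^ k) s0) = phi S ((phi S ^^ k) s0)"
          using phi_th[OF st] by blast
        obtain c where c: "(th S ^^ c) s0 = (phi S ^^ k) s0" using Suc.IH by blast
        have e: "(phi S ^^ Suc k) s0 = phi S ((phi S ^^ k) s0)" by (rule funpow_Suc_apply)
        show ?case unfolding e using orb_trans[OF c L] by blast
      qed
    qed
    have inS: "\<exists>c. (th S ^^ c) s0 = s" if "s \<in> S" for s
    proof -
      have "\<exists>k. (phi S ^^ k) s0 = s" using cyc s0 that unfolding cyclic_on_def by (elim ballE) auto
      then obtain k where "(phi S ^^ k) s0 = s" ..
      then show ?thesis using phik(2)[of k] by metis
    qed
    have allH: "\<forall>h\<in>H. \<exists>c. (th S ^^ c) s0 = h"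
    proof
      fix h assume h: "h \<in> H"
      show "\<exists>c. (th S ^^ c) s0 = h"
      proof (cases "h \<in> S")
        case True then show ?thesis using inS by simp
      next
        case False
        obtain k where k: "(\<sigma> ^^ k) h \<in> S" using B h by blast
        obtain m where m: "m > 0" "(\<sigma> ^^ m) h = h" using sig_return[OF h] by blast
        have "(\<sigma> ^^ ((m - 1) * k)) ((\<sigma> ^^ k) h) = (\<sigma> ^^ (m * k)) h"
        proof -
          have "(m - 1) * k + k = m * k" using m(1)
            by (cases m) auto
          then show ?thesis by (metis comp_apply funpow_add)
        qed
        also have "\<dots> = h" using funpow_period[OF m(2)] by simp
        finally have hh: "(\<sigma> ^^ ((m - 1) * k)) ((\<sigma> ^^ k) h) = h" .
        obtain s j where sj: "s \<in> S" "h = (\<sigma> ^^ Suc j) (\<alpha> s)"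
            "\<forall>i. 0 < i \<and> i \<le> j \<longrightarrow> (\<sigma> ^^ i) (\<alpha> s) \<notin> S"
          using back_seg[OF k hh False st] by blast
        have "(th S ^^ Suc j) s = h" using seg[OF sj(1) sj(3)] sj(2) by simp
        then show ?thesis using inS[OF sj(1)] orb_trans by blast
      qed
    qed
    have "s0 \<in> H" using st s0 unfolding stable_def by auto
    then have "cyclic_on H (th S)" by (rule perm_cyclic[OF th_perm[OF st] fin _ allH])
    then show ?thesis using st by simp
  qed
qed

lemma cyclic_covered:
  assumes st: "stable S" and cyc: "cyclic_on H (th S)"
  shows "covered_map H \<sigma> \<alpha> r S"
proof -
  have SH: "S \<subseteq> H" "\<forall>h\<in>S. \<alpha> h \<in> S" using st unfolding stable_def by auto
  have cover: "(\<forall>h\<in>H. \<exists>k. (\<sigma> ^^ k) h \<in> S) \<or> (S = {} \<and> cyclic_on H \<sigma>)"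
  proof (cases "S = {}")
    case True then show ?thesis using cyc th_empty by simp
  next
    case False
    then obtain s where s: "s \<in> S" by blast
    have "\<exists>k. (\<sigma> ^^ k) h \<in> S" if h: "h \<in> H" for h
    proof (rule ccontr)
      assume nk: "\<not> (\<exists>k. (\<sigma> ^^ k) h \<in> S)"
      have eq: "(th S ^^ k) h = (\<sigma> ^^ k) h" for k
      proof (induction k)
        case (Suc k)
        have "(th S ^^ Suc k) h = th S ((th S ^^ k) h)" by simp
        moreover have "(\<sigma> ^^ k) h \<notin> S" using nk by blast
        moreover have "th S x = \<sigma> x" if "x \<notin> S" for x using that by (simp add: motion_def)
        ultimately show ?case using Suc by simp
      qed simp
      obtain k where "(th S ^^ k) h = s" using cyclic_onD[OF cyc] h s SH by blast
      then have "(\<sigma> ^^ k) h \<in> S" using eq[of k] s by simp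
      then show False using nk by blast
    qed
    then show ?thesis by blast
  qed
  have phicyc: "cyclic_on S (phi S)"
    unfolding cyclic_on_def
  proof (intro ballI)
    fix s s' assume ss: "s \<in> S" "s' \<in> S"
    obtain N where N: "(th S ^^ N) s = s'" using cyclic_onD[OF cyc] ss SH by blast
    have "\<forall>s\<in>S. (th S ^^ N) s \<in> S \<longrightarrow> (\<exists>k. (phi S ^^ k) s = (th S ^^ N) s)"
    proof (induction N rule: less_induct)
      case (less N)
      show ?case
      proof (intro ballI impI)
        fix s assume s: "s \<in> S" and sN: "(th S ^^ N) s \<in> S"
        show "\<exists>k. (phi S ^^ k) s = (th S ^^ N) s"
        proof (cases "N = 0")
          case True then show ?thesis by (intro exI[of _ 0]) simp
        next
          case False
          obtain L where L: "L > 0" "(th S ^^ L) s = phi S s"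
            "\<forall>i. 0 < i \<and> i < L \<longrightarrow> (th S ^^ i) s \<notin> S" "phi S s \<in> S"
            using phi_th[OF st s] by blast
          have LN: "L \<le> N"
          proof (rule ccontr)
            assume "\<not> L \<le> N"
            then have "0 < N \<and> N < L" using False by simp
            then show False using L(3) sN by blast
          qed
          have eqN: "(th S ^^ N) s = (th S ^^ (N - L)) (phi S s)"
          proof -
            have "(th S ^^ ((N - L) + L)) s = (th S ^^ (N - L)) ((th S ^^ L) s)"
              by (simp only: funpow_add comp_apply)
            then show ?thesis using LN L(2) by simp
          qed
          have lt: "N - L < N" using L(1) LN False by simp
          have inS2: "(th S ^^ (N - L)) (phi S s) \<in> S" using sN by (simp only: eqN)
          obtain k where k: "(phi S ^^ k) (phi S s) = (th S ^^ (N - L)) (phi S s)"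
            using less.IH[OF lt] L(4) inS2 by blast
          have "(phi S ^^ Suc k) s = (th S ^^ N) s"
            unfolding funpow_Suc_apply2 k eqN by (rule refl)
          then show ?thesis by blast
        qed
      qed
    qed
    then show "\<exists>k. (phi S ^^ k) s = s'" using ss N by blast
  qed
  have trans: "transitive_on S (restr \<sigma> S) (restr \<alpha> S)"
    unfolding transitive_on_def
  proof (intro ballI)
    fix x y assume xy: "x \<in> S" "y \<in> S"
    obtain k where k: "(phi S ^^ k) x = y" using cyclic_onD[OF phicyc] xy by blast
    have step: "(z, phi S z) \<in> (gen_rel (restr \<sigma> S) (restr \<alpha> S))\<^sup>*" for z
    proof -
      have "(z, restr \<alpha> S z) \<in> gen_rel (restr \<sigma> S) (restr \<alpha> S)" unfolding gen_rel_def by blast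
      moreover have "(restr \<alpha> S z, restr \<sigma> S (restr \<alpha> S z)) \<in> gen_rel (restr \<sigma> S) (restr \<alpha> S)"
        unfolding gen_rel_def by blast
      ultimately show ?thesis by auto
    qed
    have "(x, (phi S ^^ k) x) \<in> (gen_rel (restr \<sigma> S) (restr \<alpha> S))\<^sup>*"
    proof (induction k)
      case (Suc k)
      have e: "(phi S ^^ Suc k) x = phi S ((phi S ^^ k) x)" by (rule funpow_Suc_apply)
      show ?case unfolding e using Suc step[of "(phi S ^^ k) x"] by (rule rtrancl_trans)
    qed simp
    then show "(x, y) \<in> (gen_rel (restr \<sigma> S) (restr \<alpha> S))\<^sup>*" using k by simp
  qed
  have cu: "connecting_unicellular H \<sigma> \<alpha> S" unfolding connecting_unicellular_def
    by (rule conjI[OF trans conjI[OF cover phicyc]])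
  show ?thesis unfolding covered_map_def using SH cu by blast
qed

lemma covered_iff: "covered_map H \<sigma> \<alpha> r S \<longleftrightarrow> stable S \<and> cyclic_on H (th S)"
proof
  assume "covered_map H \<sigma> \<alpha> r S" then show "stable S \<and> cyclic_on H (th S)" by (rule covered_cyclic)
next
  assume "stable S \<and> cyclic_on H (th S)" then show "covered_map H \<sigma> \<alpha> r S"
    using cyclic_covered by blast
qed

end



context RM begin

abbreviation tt :: "'a set \<Rightarrow> 'a \<Rightarrow> nat" where "tt S h \<equiv> appearance_index \<sigma> \<alpha> r S h"

lemma tt_props:
  assumes "stable S" "(th S ^^ k) r = h"
  shows "tt S h < card H \<and> (th S ^^ tt S h) r = h"
  using perm_least_bound[OF th_perm[OF assms(1)] fin rH assms(2)]
  unfolding appearance_index_def by simp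

lemma tt_le: "(th S ^^ k) r = h \<Longrightarrow> tt S h \<le> k"
  unfolding appearance_index_def by (rule Least_le)

lemma tt_inj:
  assumes "stable S" "(th S ^^ k) r = h" "(th S ^^ k') r = h'" "tt S h = tt S h'"
  shows "h = h'"
  using tt_props[OF assms(1,2)] tt_props[OF assms(1,3)] assms(4) by metis

lemma tt_next:
  assumes st: "stable S" and k: "(th S ^^ k) r = h" and ne: "th S h \<noteq> r"
  shows "tt S (th S h) = Suc (tt S h)"
proof -
  have hk: "(th S ^^ tt S h) r = h" using tt_props[OF st k] by simp
  have k2: "(th S ^^ Suc (tt S h)) r = th S h" using hk by simp
  have le: "tt S (th S h) \<le> Suc (tt S h)" using tt_le[OF k2] .
  have sp: "(th S ^^ tt S (th S h)) r = th S h" using tt_props[OF st k2] by simp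
  show ?thesis
  proof (cases "tt S (th S h)")
    case 0 then show ?thesis using sp ne by simp
  next
    case (Suc j)
    then have "th S ((th S ^^ j) r) = th S h" using sp by simp
    then have "(th S ^^ j) r = h" using th_inj[OF st] by (auto dest: injD)
    then have "tt S h \<le> j" by (rule tt_le)
    then show ?thesis using le Suc by simp
  qed
qed

lemma delta_mem:
  "h \<in> Delta H \<sigma> \<alpha> r S \<longleftrightarrow> (h \<in> S \<and> tt S (\<alpha> h) < tt S h) \<or> (h \<in> H \<and> h \<notin> S \<and> tt S h < tt S (\<alpha> h))"
  unfolding Delta_def appears_before_def by auto

lemma orient_xor:
  assumes "oriented_map H \<alpha> I" "h \<in> H"
  shows "\<alpha> h \<in> I \<longleftrightarrow> h \<notin> I"
proof
  assume "\<alpha> h \<in> I"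
  then have "\<alpha> (\<alpha> h) \<in> H - I" using assms unfolding oriented_map_def by blast
  then show "h \<notin> I" using ainv[OF assms(2)] by simp
next
  assume "h \<notin> I"
  then have "h \<in> \<alpha> ` I" using assms unfolding oriented_map_def by blast
  then obtain i where "i \<in> I" "h = \<alpha> i" by blast
  moreover have "i \<in> H" using assms(1) \<open>i \<in> I\<close> unfolding oriented_map_def by blast
  ultimately show "\<alpha> h \<in> I" using ainv by simp
qed

lemma cov_facts:
  assumes "covered_map H \<sigma> \<alpha> r S"
  shows "stable S" "\<And>h. h \<in> H \<Longrightarrow> \<exists>k. (th S ^^ k) r = h"
proof -
  have c: "stable S \<and> cyclic_on H (th S)" by (rule covered_cyclic[OF assms])
  then show "stable S" by simp
  show "\<exists>k. (th S ^^ k) r = h" if "h \<in> H" for h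
    using cyclic_onD[of H "th S" r h] c rH that by simp
qed

lemma stable_alpha: "stable S \<Longrightarrow> h \<in> H \<Longrightarrow> \<alpha> h \<in> S \<longleftrightarrow> h \<in> S"
  unfolding stable_def using ainv by metis

lemma tt_ne:
  assumes "covered_map H \<sigma> \<alpha> r S" "h \<in> H"
  shows "tt S h \<noteq> tt S (\<alpha> h)"
proof
  assume e: "tt S h = tt S (\<alpha> h)"
  obtain k where k: "(th S ^^ k) r = h" using cov_facts(2)[OF assms] by blast
  obtain k' where k': "(th S ^^ k') r = \<alpha> h" using cov_facts(2)[OF assms(1) aH[OF assms(2)]] by blast
  have "h = \<alpha> h" using tt_inj[OF cov_facts(1)[OF assms(1)] k k' e] .
  then show False using afix[OF assms(2)] by simp
qed

lemma delta_oriented: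
  assumes cov: "covered_map H \<sigma> \<alpha> r S"
  shows "oriented_map H \<alpha> (Delta H \<sigma> \<alpha> r S)"
proof -
  have st: "stable S" using cov_facts(1)[OF cov] .
  have SH: "S \<subseteq> H" using st unfolding stable_def by auto
  let ?I = "Delta H \<sigma> \<alpha> r S"
  have IH: "?I \<subseteq> H" using SH unfolding Delta_def by auto
  have key: "\<alpha> h \<in> ?I \<longleftrightarrow> h \<notin> ?I" if h: "h \<in> H" for h
  proof -
    have ne: "tt S h \<noteq> tt S (\<alpha> h)" using tt_ne[OF cov h] .
    have sa: "\<alpha> h \<in> S \<longleftrightarrow> h \<in> S" using stable_alpha[OF st h] .
    have aa: "\<alpha> (\<alpha> h) = h" using ainv[OF h] .
    show ?thesis using ne sa aa aH[OF h] h unfolding delta_mem by auto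
  qed
  show ?thesis unfolding oriented_map_def
  proof (intro conjI IH equalityI subsetI)
    fix x assume "x \<in> \<alpha> ` ?I"
    then obtain h where "h \<in> ?I" "x = \<alpha> h" by blast
    then show "x \<in> H - ?I" using key IH aH by blast
  next
    fix x assume x: "x \<in> H - ?I"
    then have "\<alpha> x \<in> ?I" using key by blast
    then show "x \<in> \<alpha> ` ?I" using ainv x by (metis DiffD1 image_eqI)
  qed
qed

lemma first_visit:
  assumes cov: "covered_map H \<sigma> \<alpha> r S" and k: "(th S ^^ k) r = x"
    and nb: "\<forall>j<k. (th S ^^ j) r \<noteq> \<alpha> x"
  shows "x \<in> S \<longleftrightarrow> x \<notin> Delta H \<sigma> \<alpha> r S"
proof -
  have st: "stable S" using cov_facts(1)[OF cov] .
  have xH: "x \<in> H" using thpH[OF st rH] k by blast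
  obtain k' where k': "(th S ^^ k') r = \<alpha> x" using cov_facts(2)[OF cov aH[OF xH]] by blast
  have t1: "tt S x \<le> k" using tt_le[OF k] .
  have t2: "(th S ^^ tt S (\<alpha> x)) r = \<alpha> x" using tt_props[OF st k'] by simp
  have "\<not> tt S (\<alpha> x) < k" using nb t2 by blast
  moreover have "tt S (\<alpha> x) \<noteq> k" using t2 k afix[OF xH] by auto
  ultimately have "tt S x < tt S (\<alpha> x)" using t1 by simp
  then show ?thesis using xH unfolding delta_mem by auto
qed

lemma delta_inj:
  assumes c1: "covered_map H \<sigma> \<alpha> r S1" and c2: "covered_map H \<sigma> \<alpha> r S2"
    and eq: "Delta H \<sigma> \<alpha> r S1 = Delta H \<sigma> \<alpha> r S2"
  shows "S1 = S2"
proof -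
  have st1: "stable S1" and st2: "stable S2" using cov_facts(1) c1 c2 by auto
  have main: "(th S1 ^^ k) r = (th S2 ^^ k) r \<and> ((th S1 ^^ k) r \<in> S1 \<longleftrightarrow> (th S1 ^^ k) r \<in> S2)" for k
  proof (induction k rule: less_induct)
    case (less k)
    have same: "(th S1 ^^ k) r = (th S2 ^^ k) r"
    proof (cases k)
      case 0 then show ?thesis by simp
    next
      case (Suc k')
      then have kk: "k' < k" by simp
      have ih: "(th S1 ^^ k') r = (th S2 ^^ k') r"
        "(th S1 ^^ k') r \<in> S1 \<longleftrightarrow> (th S1 ^^ k') r \<in> S2" using less[OF kk] by (rule conjunct1, rule conjunct2)
      have "th S1 ((th S1 ^^ k') r) = th S2 ((th S2 ^^ k') r)"
        using ih unfolding motion_def by simp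
      then show ?thesis using Suc by simp
    qed
    define x where "x = (th S1 ^^ k) r"
    have xH: "x \<in> H" using thpH[OF st1 rH] unfolding x_def by blast
    have mem: "x \<in> S1 \<longleftrightarrow> x \<in> S2"
    proof (cases "\<exists>j<k. (th S1 ^^ j) r = \<alpha> x")
      case True
      then obtain j where j: "j < k" "(th S1 ^^ j) r = \<alpha> x" by blast
      have "(th S1 ^^ j) r \<in> S1 \<longleftrightarrow> (th S1 ^^ j) r \<in> S2" using less[OF j(1)] by (rule conjunct2)
      then have "\<alpha> x \<in> S1 \<longleftrightarrow> \<alpha> x \<in> S2" using j(2) by simp
      then show ?thesis using stable_alpha[OF st1 xH] stable_alpha[OF st2 xH] by simp
    next
      case False
      then have n1: "\<forall>j<k. (th S1 ^^ j) r \<noteq> \<alpha> x" by blast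
      then have n2: "\<forall>j<k. (th S2 ^^ j) r \<noteq> \<alpha> x" using less by auto
      have "x \<in> S1 \<longleftrightarrow> x \<notin> Delta H \<sigma> \<alpha> r S1"
        using first_visit[OF c1 _ n1] x_def by simp
      moreover have "x \<in> S2 \<longleftrightarrow> x \<notin> Delta H \<sigma> \<alpha> r S2"
        using first_visit[OF c2 _ n2] x_def same by simp
      ultimately show ?thesis using eq by simp
    qed
    show ?case using same mem x_def by simp
  qed
  show ?thesis
  proof (intro equalityI subsetI)
    fix h assume h: "h \<in> S1"
    then have "h \<in> H" using st1 unfolding stable_def by auto
    then obtain k where "(th S1 ^^ k) r = h" using cov_facts(2)[OF c1] by blast
    then show "h \<in> S2" using main[of k] h by metis
  next
    fix h assume h: "h \<in> S2"
    then have "h \<in> H" using st2 unfolding stable_def by auto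
    then obtain k where "(th S2 ^^ k) r = h" using cov_facts(2)[OF c2] by blast
    then show "h \<in> S1" using main[of k] h by metis
  qed
qed

end



context RM begin

lemma cov_tt:
  assumes cov: "covered_map H \<sigma> \<alpha> r S" and z: "z \<in> H"
  shows "tt S z < card H" "(th S ^^ tt S z) r = z"
proof -
  obtain k where "(th S ^^ k) r = z" using cov_facts(2)[OF cov z] by blast
  then show "tt S z < card H" "(th S ^^ tt S z) r = z" using tt_props[OF cov_facts(1)[OF cov]] by auto
qed

lemma cov_next:
  assumes cov: "covered_map H \<sigma> \<alpha> r S" and z: "z \<in> H" and ne: "th S z \<noteq> r"
  shows "tt S (th S z) = Suc (tt S z)"
  using tt_next[OF cov_facts(1)[OF cov] cov_tt(2)[OF cov z] ne] .

lemma parent: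
  assumes cov: "covered_map H \<sigma> \<alpha> r S" and hI: "h \<in> Delta H \<sigma> \<alpha> r S"
  shows "\<exists>q>0. ((\<sigma> ^^ q) (\<alpha> h) = r \<or> ((\<sigma> ^^ q) (\<alpha> h) \<in> Delta H \<sigma> \<alpha> r S
            \<and> tt S h < tt S ((\<sigma> ^^ q) (\<alpha> h))))
          \<and> (\<forall>p<q. (\<sigma> ^^ p) (\<alpha> h) \<in> H - Delta H \<sigma> \<alpha> r S)"
proof (rule ccontr)
  let ?I = "Delta H \<sigma> \<alpha> r S"
  define y where "y p = (\<sigma> ^^ p) (\<alpha> h)" for p
  assume na: "\<not> ?thesis"
  have A: "y q \<noteq> r \<and> \<not> (y q \<in> ?I \<and> tt S h < tt S (y q))"
    if "0 < q" "\<forall>p<q. y p \<in> H - ?I" for q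
    using na that unfolding y_def by blast
  have st: "stable S" using cov_facts(1)[OF cov] .
  have or: "oriented_map H \<alpha> ?I" using delta_oriented[OF cov] .
  have IH: "?I \<subseteq> H" using or unfolding oriented_map_def by blast
  have hH: "h \<in> H" using hI IH by blast
  have yH: "y p \<in> H" for p unfolding y_def using spH[OF aH[OF hH]] .
  have y0: "y 0 \<in> H - ?I" using orient_xor[OF or hH] hI aH[OF hH] unfolding y_def by simp
  have Q: "(\<forall>p'\<le>Suc p. y p' \<in> H - ?I) \<and> y (Suc p) \<noteq> r \<and> tt S h + Suc p \<le> tt S (y (Suc p))" for p
  proof (induction p)
    case 0
    have pre: "\<forall>p<1. y p \<in> H - ?I" using y0 by simp
    have A1: "y 1 \<noteq> r" "\<not> (y 1 \<in> ?I \<and> tt S h < tt S (y 1))" using A[OF _ pre] by auto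
    have t1: "tt S h < tt S (y 1)"
    proof (cases "h \<in> S")
      case True
      have "th S h = y 1" using True unfolding y_def motion_def by simp
      then show ?thesis using cov_next[OF cov hH] A1(1) by simp
    next
      case False
      have lt: "tt S h < tt S (\<alpha> h)" using hI False hH unfolding delta_mem by auto
      have "\<alpha> h \<notin> S" using False stable_alpha[OF st hH] by simp
      then have "th S (\<alpha> h) = y 1" unfolding y_def motion_def by simp
      then show ?thesis using cov_next[OF cov aH[OF hH]] A1(1) lt by simp
    qed
    have "y 1 \<in> H - ?I" using A1(2) t1 yH by simp
    then have "\<forall>p'\<le>Suc 0. y p' \<in> H - ?I" using y0 by (auto simp: le_Suc_eq)
    then show ?case using A1(1) t1 by simp
  next
    case (Suc p)
    let ?z = "y (Suc p)" and ?w = "y (Suc (Suc p))"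
    have pre: "\<forall>p'<Suc (Suc p). y p' \<in> H - ?I" using Suc by (simp add: less_Suc_eq_le)
    have A1: "?w \<noteq> r" "\<not> (?w \<in> ?I \<and> tt S h < tt S ?w)" using A[OF _ pre] by auto
    have zI: "?z \<in> H - ?I" using Suc by simp
    have wz: "?w = \<sigma> ?z" unfolding y_def by simp
    have zH: "?z \<in> H" using yH .
    have t1: "tt S ?z < tt S ?w"
    proof (cases "?z \<in> S")
      case True
      have "\<not> tt S (\<alpha> ?z) < tt S ?z" using zI True by (auto simp: delta_mem)
      then have lt: "tt S ?z < tt S (\<alpha> ?z)" using tt_ne[OF cov zH] by simp
      have "\<alpha> ?z \<in> S" using True stable_alpha[OF st zH] by simp
      then have "th S (\<alpha> ?z) = ?w" using wz ainv[OF zH] unfolding motion_def by simp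
      then show ?thesis using cov_next[OF cov aH[OF zH]] A1(1) lt by simp
    next
      case False
      then have "th S ?z = ?w" using wz unfolding motion_def by simp
      then show ?thesis using cov_next[OF cov zH] A1(1) by simp
    qed
    have t2: "tt S h + Suc (Suc p) \<le> tt S ?w" using Suc t1 by simp
    have "?w \<in> H - ?I" using A1(2) t2 yH by simp
    then have "\<forall>p'\<le>Suc (Suc p). y p' \<in> H - ?I" using Suc by (auto simp: le_Suc_eq)
    then show ?case using A1(1) t2 by simp
  qed
  have "tt S h + Suc (card H) \<le> tt S (y (Suc (card H)))" using Q by blast
  moreover have "tt S (y (Suc (card H))) < card H" using cov_tt(1)[OF cov yH] .
  ultimately show False by simp
qed

lemma delta_lc:
  assumes cov: "covered_map H \<sigma> \<alpha> r S"
  shows "left_connected H \<sigma> \<alpha> r (Delta H \<sigma> \<alpha> r S)"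
proof -
  let ?I = "Delta H \<sigma> \<alpha> r S"
  have or: "oriented_map H \<alpha> ?I" using delta_oriented[OF cov] .
  have IH: "?I \<subseteq> H" using or unfolding oriented_map_def by blast
  have "\<exists>hs. left_path H \<sigma> \<alpha> r ?I hs \<and> last hs = h" if "h \<in> ?I" for h
    using that
  proof (induction "card H - tt S h" arbitrary: h rule: less_induct)
    case less
    obtain q where q: "q > 0"
      "(\<sigma> ^^ q) (\<alpha> h) = r \<or> ((\<sigma> ^^ q) (\<alpha> h) \<in> ?I \<and> tt S h < tt S ((\<sigma> ^^ q) (\<alpha> h)))"
      "\<forall>p<q. (\<sigma> ^^ p) (\<alpha> h) \<in> H - ?I"
      using parent[OF cov less.prems] by blast
    have ls: "left_step H \<sigma> \<alpha> ?I ((\<sigma> ^^ q) (\<alpha> h)) h"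
      unfolding left_step_def using q(1,3) by blast
    show ?case
    proof (cases "(\<sigma> ^^ q) (\<alpha> h) = r")
      case True
      have "left_path H \<sigma> \<alpha> r ?I [h]"
        unfolding left_path_def using less.prems ls True by simp
      then show ?thesis by (intro exI[of _ "[h]"]) simp
    next
      case False
      let ?p = "(\<sigma> ^^ q) (\<alpha> h)"
      have pI: "?p \<in> ?I" and lt: "tt S h < tt S ?p" using q(2) False by auto
      have "tt S ?p < card H" using cov_tt(1)[OF cov] pI IH by blast
      then have "card H - tt S ?p < card H - tt S h" using lt by simp
      then obtain hs where hs: "left_path H \<sigma> \<alpha> r ?I hs" "last hs = ?p"
        using less.hyps pI by blast
      have hsne: "hs \<noteq> []" and hsI: "set hs \<subseteq> ?I"
        and hsst: "\<forall>j<length hs. left_step H \<sigma> \<alpha> ?I (if j = 0 then r else hs ! (j - 1)) (hs ! j)"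
        using hs(1) unfolding left_path_def by auto
      have "left_path H \<sigma> \<alpha> r ?I (hs @ [h])"
        unfolding left_path_def
      proof (intro conjI allI impI)
        show "hs @ [h] \<noteq> []" by simp
        show "set (hs @ [h]) \<subseteq> ?I" using hsI less.prems by simp
        fix j assume j: "j < length (hs @ [h])"
        show "left_step H \<sigma> \<alpha> ?I (if j = 0 then r else (hs @ [h]) ! (j - 1)) ((hs @ [h]) ! j)"
        proof (cases "j < length hs")
          case True
          then show ?thesis using hsst by (auto simp: nth_append)
        next
          case False
          then have jj: "j = length hs" using j by simp
          then have j0: "j \<noteq> 0" using hsne by simp
          have "(hs @ [h]) ! (j - 1) = last hs"
            using jj hsne by (simp add: nth_append last_conv_nth)
          then show ?thesis using ls j0 jj hs(2) by simp
        qed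
      qed
      then show ?thesis by (intro exI[of _ "hs @ [h]"]) simp
    qed
  qed
  then show ?thesis unfolding left_connected_def by blast
qed

end



context RM begin

definition CC :: "'a set \<Rightarrow> 'a set \<Rightarrow> nat \<Rightarrow> bool" where
  "CC I S j \<longleftrightarrow> ((\<forall>i<j. (th S ^^ i) r \<noteq> \<alpha> ((th S ^^ j) r)) \<longrightarrow>
                 ((th S ^^ j) r \<in> S \<longleftrightarrow> (th S ^^ j) r \<notin> I))"

lemma exS: "\<exists>S. stable S \<and> (\<forall>j<K. CC I S j)"
proof (induction K)
  case 0
  have "stable {}" unfolding stable_def by simp
  then show ?case by blast
next
  case (Suc K)
  then obtain S where st: "stable S" and cs: "\<forall>j<K. CC I S j" by blast
  define x where "x = (th S ^^ K) r"
  have xH: "x \<in> H" unfolding x_def using thpH[OF st rH] .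
  show ?case
  proof (cases "CC I S K")
    case True
    then have "\<forall>j<Suc K. CC I S j" using cs less_Suc_eq by auto
    then show ?thesis using st by blast
  next
    case False
    then have P: "\<forall>i<K. (th S ^^ i) r \<noteq> \<alpha> x" and nx: "\<not> (x \<in> S \<longleftrightarrow> x \<notin> I)"
      unfolding CC_def x_def by auto
    have xnew: "\<forall>i<K. (th S ^^ i) r \<noteq> x"
    proof (intro allI impI)
      fix i assume i: "i < K"
      show "(th S ^^ i) r \<noteq> x"
      proof
        assume e: "(th S ^^ i) r = x"
        have "CC I S i" using cs i by blast
        moreover have "\<forall>i'<i. (th S ^^ i') r \<noteq> \<alpha> ((th S ^^ i) r)" using P i e by auto
        ultimately have "x \<in> S \<longleftrightarrow> x \<notin> I" unfolding CC_def e by blast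
        then show False using nx by blast
      qed
    qed
    define S' where "S' = (if x \<in> S then S - {x, \<alpha> x} else S \<union> {x, \<alpha> x})"
    have axH: "\<alpha> x \<in> H" using aH[OF xH] .
    have aax: "\<alpha> (\<alpha> x) = x" using ainv[OF xH] .
    have SH: "S \<subseteq> H" and Sa: "\<forall>h\<in>S. \<alpha> h \<in> S" using st unfolding stable_def by auto
    have st': "stable S'"
      unfolding stable_def
    proof (intro conjI ballI)
      show "S' \<subseteq> H" using SH xH axH unfolding S'_def by auto
      fix h assume h: "h \<in> S'"
      then have hH: "h \<in> H" using SH xH axH unfolding S'_def by (auto split: if_splits)
      show "\<alpha> h \<in> S'"
      proof (cases "x \<in> S")
        case True
        then have hS: "h \<in> S" "h \<noteq> x" "h \<noteq> \<alpha> x" using h unfolding S'_def by auto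
        have "\<alpha> h \<noteq> x" using hS(3) ainv[OF hH] by metis
        moreover have "\<alpha> h \<noteq> \<alpha> x" using hS(2) ainv[OF hH] aax by metis
        ultimately show ?thesis using Sa hS(1) True unfolding S'_def by auto
      next
        case False
        then show ?thesis using h Sa aax unfolding S'_def by auto
      qed
    qed
    have memb: "z \<in> S' \<longleftrightarrow> z \<in> S" if "z \<noteq> x" "z \<noteq> \<alpha> x" for z
      using that unfolding S'_def by auto
    have thsame: "th S' z = th S z" if "z \<noteq> x" "z \<noteq> \<alpha> x" for z
      using memb[OF that] unfolding motion_def by simp
    have agree: "(th S' ^^ j) r = (th S ^^ j) r" if "j \<le> K" for j
      using that
    proof (induction j)
      case 0 then show ?case by simp
    next
      case (Suc j)
      then have jK: "j < K" by simp
      have "(th S ^^ j) r \<noteq> x" "(th S ^^ j) r \<noteq> \<alpha> x" using xnew P jK by auto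
      then show ?case using Suc thsame by simp
    qed
    have "\<forall>j<Suc K. CC I S' j"
    proof (intro allI impI)
      fix j assume j: "j < Suc K"
      show "CC I S' j"
      proof (cases "j < K")
        case True
        have c: "CC I S j" using cs True by blast
        have e1: "(th S' ^^ j) r = (th S ^^ j) r" using agree True by simp
        have e2: "\<forall>i<j. (th S' ^^ i) r = (th S ^^ i) r" using agree True by simp
        have n1: "(th S ^^ j) r \<noteq> x" "(th S ^^ j) r \<noteq> \<alpha> x" using xnew P True by auto
        have "(th S ^^ j) r \<in> S' \<longleftrightarrow> (th S ^^ j) r \<in> S" using memb[OF n1] .
        then show ?thesis using c e1 e2 unfolding CC_def by simp
      next
        case False
        then have jK: "j = K" using j by simp
        have e1: "(th S' ^^ K) r = x" using agree x_def by simp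
        have "x \<in> S' \<longleftrightarrow> x \<notin> S" unfolding S'_def by auto
        then show ?thesis using jK e1 nx unfolding CC_def by auto
      qed
    qed
    then show ?thesis using st' by blast
  qed
qed

lemma delta_surj:
  assumes or: "oriented_map H \<alpha> I" and lc: "left_connected H \<sigma> \<alpha> r I"
  shows "\<exists>S. covered_map H \<sigma> \<alpha> r S \<and> Delta H \<sigma> \<alpha> r S = I"
proof -
  obtain S where st: "stable S" and cs: "\<forall>j<card H. CC I S j" using exS by blast
  have IH: "I \<subseteq> H" using or unfolding oriented_map_def by blast
  define V where "V = {y. \<exists>k. (th S ^^ k) r = y}"
  have rV: "r \<in> V" unfolding V_def by (intro CollectI exI[of _ 0]) simp
  have Vback: "y \<in> V" if yV: "th S y \<in> V" for y
  proof -
    have "\<exists>k. (th S ^^ k) r = th S y" using yV by (simp add: V_def)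
    then obtain k where k: "(th S ^^ k) r = th S y" by blast
    obtain j where "y = (th S ^^ j) r" using perm_back[OF th_perm[OF st] fin rH k[symmetric]] by blast
    then show ?thesis unfolding V_def by auto
  qed
  have thV: "th S y \<in> V" if yV: "y \<in> V" for y
  proof -
    have "\<exists>k. (th S ^^ k) r = y" using yV by (simp add: V_def)
    then obtain k where "(th S ^^ k) r = y" by blast
    then have "(th S ^^ Suc k) r = th S y" by simp
    then show ?thesis unfolding V_def by blast
  qed
  have FV: "v \<in> S \<longleftrightarrow> v \<notin> I" if v: "v \<in> V" and nv: "\<alpha> v \<notin> V" for v
  proof -
    obtain k where k: "(th S ^^ k) r = v" using v unfolding V_def by blast
    have tp: "tt S v < card H" "(th S ^^ tt S v) r = v" using tt_props[OF st k] by auto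
    have "CC I S (tt S v)" using cs tp(1) by blast
    moreover have "\<forall>i<tt S v. (th S ^^ i) r \<noteq> \<alpha> ((th S ^^ tt S v) r)"
      using nv unfolding V_def tp(2) by blast
    ultimately show ?thesis unfolding CC_def tp(2) by blast
  qed
  have K1: "prev \<notin> V" if hI: "h \<in> I" and hV: "h \<notin> V" and ls: "left_step H \<sigma> \<alpha> I prev h" for h prev
  proof -
    obtain q where q: "q > 0" "prev = (\<sigma> ^^ q) (\<alpha> h)" "\<forall>p<q. (\<sigma> ^^ p) (\<alpha> h) \<in> H - I"
      using ls unfolding left_step_def by blast
    have hH: "h \<in> H" using hI IH by blast
    have claim: "(\<sigma> ^^ Suc p) (\<alpha> h) \<notin> V" if "p < q" for p
      using that
    proof (induction p)
      case 0
      show ?case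
      proof (cases "h \<in> S")
        case True
        then have "th S h = (\<sigma> ^^ Suc 0) (\<alpha> h)" unfolding motion_def by simp
        then show ?thesis using Vback hV by metis
      next
        case False
        have anS: "\<alpha> h \<notin> S" using False stable_alpha[OF st hH] by simp
        have anV: "\<alpha> h \<notin> V"
        proof
          assume ahV: "\<alpha> h \<in> V"
          have "\<alpha> (\<alpha> h) \<notin> V" using hV ainv[OF hH] by simp
          then have "\<alpha> h \<in> S \<longleftrightarrow> \<alpha> h \<notin> I" using FV[OF ahV] by blast
          moreover have "\<alpha> h \<notin> I" using q(3) 0 by force
          ultimately show False using anS by blast
        qed
        have "th S (\<alpha> h) = (\<sigma> ^^ Suc 0) (\<alpha> h)" using anS unfolding motion_def by simp
        then show ?thesis using Vback anV by metis
      qed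
    next
      case (Suc p)
      let ?z = "(\<sigma> ^^ Suc p) (\<alpha> h)"
      have zV: "?z \<notin> V" using Suc by simp
      have zI: "?z \<in> H - I" using q(3) Suc.prems by blast
      have zH: "?z \<in> H" using zI by blast
      have w: "(\<sigma> ^^ Suc (Suc p)) (\<alpha> h) = \<sigma> ?z" by simp
      show ?case
      proof (cases "?z \<in> S")
        case False
        then have "th S ?z = \<sigma> ?z" unfolding motion_def by simp
        then show ?thesis using w Vback zV by metis
      next
        case True
        have azS: "\<alpha> ?z \<in> S" using True stable_alpha[OF st zH] by simp
        have azI: "\<alpha> ?z \<in> I" using orient_xor[OF or zH] zI by blast
        have azV: "\<alpha> ?z \<notin> V"
        proof
          assume azV: "\<alpha> ?z \<in> V"
          have "\<alpha> (\<alpha> ?z) \<notin> V" using zV ainv[OF zH] by simp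
          then have "\<alpha> ?z \<in> S \<longleftrightarrow> \<alpha> ?z \<notin> I" using FV[OF azV] by blast
          then show False using azS azI by blast
        qed
        have "th S (\<alpha> ?z) = \<sigma> ?z" using azS ainv[OF zH] unfolding motion_def by simp
        then show ?thesis using w Vback azV by metis
      qed
    qed
    obtain q' where "q = Suc q'" using q(1) gr0_implies_Suc by blast
    then show ?thesis using claim[of q'] q(2) by simp
  qed
  have IV: "I \<subseteq> V"
  proof
    fix h assume hI: "h \<in> I"
    obtain hs where hs: "left_path H \<sigma> \<alpha> r I hs" "last hs = h"
      using lc hI unfolding left_connected_def by blast
    have hsne: "hs \<noteq> []" and hsI: "set hs \<subseteq> I"
      and hsst: "\<forall>j<length hs. left_step H \<sigma> \<alpha> I (if j = 0 then r else hs ! (j - 1)) (hs ! j)"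
      using hs(1) unfolding left_path_def by auto
    have allV: "hs ! j \<in> V" if "j < length hs" for j
      using that
    proof (induction j)
      case 0
      have "left_step H \<sigma> \<alpha> I r (hs ! 0)" using hsst 0 by auto
      moreover have "hs ! 0 \<in> I" using hsI 0 by auto
      ultimately show ?case using K1 rV by blast
    next
      case (Suc j)
      have "left_step H \<sigma> \<alpha> I (hs ! j) (hs ! Suc j)" using hsst Suc.prems by fastforce
      moreover have "hs ! Suc j \<in> I" using hsI Suc.prems by auto
      moreover have "hs ! j \<in> V" using Suc by simp
      ultimately show ?case using K1 by blast
    qed
    have "h = hs ! (length hs - 1)" using hs(2) hsne by (simp add: last_conv_nth)
    then show "h \<in> V" using allV hsne by simp
  qed
  have K2: "\<sigma> y \<in> H - I \<and> \<sigma> y \<notin> V" if yI: "y \<in> H - I" and yV: "y \<notin> V" for y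
  proof -
    have yH: "y \<in> H" using yI by blast
    have ayI: "\<alpha> y \<in> I" using orient_xor[OF or yH] yI by blast
    then have ayV: "\<alpha> y \<in> V" using IV by blast
    have "\<alpha> (\<alpha> y) \<notin> V" using yV ainv[OF yH] by simp
    then have "\<alpha> y \<in> S \<longleftrightarrow> \<alpha> y \<notin> I" using FV[OF ayV] by blast
    then have "y \<notin> S" using ayI stable_alpha[OF st yH] by blast
    then have "th S y = \<sigma> y" unfolding motion_def by simp
    then have "\<sigma> y \<notin> V" using Vback yV by metis
    then show ?thesis using IV sH[OF yH] by blast
  qed
  have OV: "H - I \<subseteq> V"
  proof
    fix x assume xI: "x \<in> H - I"
    show "x \<in> V"
    proof (rule ccontr)
      assume xV: "x \<notin> V"
      have allp: "(\<sigma> ^^ p) x \<in> H - I \<and> (\<sigma> ^^ p) x \<notin> V" for p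
      proof (induction p)
        case 0 then show ?case using xI xV by simp
      next
        case (Suc p) then show ?case using K2 by simp
      qed
      have xH: "x \<in> H" using xI by blast
      have axI: "\<alpha> x \<in> I" using orient_xor[OF or xH] xI by blast
      obtain hs where hs: "left_path H \<sigma> \<alpha> r I hs" "last hs = \<alpha> x"
        using lc axI unfolding left_connected_def by blast
      have hsne: "hs \<noteq> []" and hsI: "set hs \<subseteq> I"
        and hsst: "\<forall>j<length hs. left_step H \<sigma> \<alpha> I (if j = 0 then r else hs ! (j - 1)) (hs ! j)"
        using hs(1) unfolding left_path_def by auto
      define j where "j = length hs - 1"
      have jl: "j < length hs" using hsne unfolding j_def by simp
      have hj: "hs ! j = \<alpha> x" using hs(2) hsne unfolding j_def by (simp add: last_conv_nth)
      define prev where "prev = (if j = 0 then r else hs ! (j - 1))"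
      have "left_step H \<sigma> \<alpha> I prev (\<alpha> x)" using hsst jl hj unfolding prev_def by metis
      then obtain q where "prev = (\<sigma> ^^ q) x" using ainv[OF xH] unfolding left_step_def by auto
      then have pV: "prev \<notin> V" using allp by simp
      have "prev \<in> V"
      proof (cases "j = 0")
        case True then show ?thesis using rV unfolding prev_def by simp
      next
        case False
        then have "hs ! (j - 1) \<in> I" using hsI jl by auto
        then show ?thesis using IV False unfolding prev_def by auto
      qed
      then show False using pV by blast
    qed
  qed
  have allH: "\<forall>h\<in>H. \<exists>k. (th S ^^ k) r = h" using IV OV unfolding V_def by blast
  have cyc: "cyclic_on H (th S)" by (rule perm_cyclic[OF th_perm[OF st] fin rH allH])
  have cov: "covered_map H \<sigma> \<alpha> r S" by (rule cyclic_covered[OF st cyc])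
  have SH: "S \<subseteq> H" using st unfolding stable_def by auto
  have DH: "Delta H \<sigma> \<alpha> r S \<subseteq> H" using SH unfolding Delta_def by auto
  have eqH: "h \<in> Delta H \<sigma> \<alpha> r S \<longleftrightarrow> h \<in> I" if hH: "h \<in> H" for h
  proof -
    have ne: "tt S h \<noteq> tt S (\<alpha> h)" using tt_ne[OF cov hH] .
    obtain k where k: "(th S ^^ k) r = h" using allH hH by blast
    obtain k' where k': "(th S ^^ k') r = \<alpha> h" using allH aH[OF hH] by blast
    have th1: "(th S ^^ tt S h) r = h" using tt_props[OF st k] by simp
    have th2: "(th S ^^ tt S (\<alpha> h)) r = \<alpha> h" using tt_props[OF st k'] by simp
    have hV: "h \<in> V" "\<alpha> h \<in> V" using k k' unfolding V_def by auto
    show ?thesis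
    proof (cases "tt S h < tt S (\<alpha> h)")
      case True
      have "\<forall>i<tt S h. (th S ^^ i) r \<noteq> \<alpha> h"
        using True tt_le by (metis leD order.strict_trans)
      then have "h \<in> S \<longleftrightarrow> h \<notin> I"
        using cs tt_props[OF st k] th1 unfolding CC_def by metis
      then show ?thesis using True hH unfolding delta_mem by auto
    next
      case False
      then have lt: "tt S (\<alpha> h) < tt S h" using ne by simp
      have "\<forall>i<tt S (\<alpha> h). (th S ^^ i) r \<noteq> \<alpha> (\<alpha> h)"
        using lt tt_le ainv[OF hH] by (metis leD order.strict_trans)
      then have "\<alpha> h \<in> S \<longleftrightarrow> \<alpha> h \<notin> I"
        using cs tt_props[OF st k'] th2 unfolding CC_def by metis
      then have "h \<in> S \<longleftrightarrow> h \<in> I" using stable_alpha[OF st hH] orient_xor[OF or hH] by blast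
      then show ?thesis using lt hH unfolding delta_mem by auto
    qed
  qed
  have "Delta H \<sigma> \<alpha> r S = I" using eqH DH IH by blast
  then show ?thesis using cov by blast
qed

end


theorem mainTheorem2:
  fixes H :: "'a set" and \<sigma> \<alpha> :: "'a \<Rightarrow> 'a" and r :: 'a
  assumes "rooted_map H \<sigma> \<alpha> r"
  shows "bij_betw (Delta H \<sigma> \<alpha> r)
           {S. covered_map H \<sigma> \<alpha> r S}
           {I. oriented_map H \<alpha> I \<and> left_connected H \<sigma> \<alpha> r I}"
proof -
  interpret RM H \<sigma> \<alpha> r using assms by (rule RM.intro)
  show ?thesis unfolding bij_betw_def
  proof
    show "inj_on (Delta H \<sigma> \<alpha> r) {S. covered_map H \<sigma> \<alpha> r S}"
      by (rule inj_onI) (use delta_inj in blast)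
    show "Delta H \<sigma> \<alpha> r ` {S. covered_map H \<sigma> \<alpha> r S}
        = {I. oriented_map H \<alpha> I \<and> left_connected H \<sigma> \<alpha> r I}"
    proof (intro equalityI subsetI)
      fix I assume "I \<in> Delta H \<sigma> \<alpha> r ` {S. covered_map H \<sigma> \<alpha> r S}"
      then obtain S where "covered_map H \<sigma> \<alpha> r S" "I = Delta H \<sigma> \<alpha> r S" by blast
      then show "I \<in> {I. oriented_map H \<alpha> I \<and> left_connected H \<sigma> \<alpha> r I}"
        using delta_oriented delta_lc by blast
    next
      fix I assume "I \<in> {I. oriented_map H \<alpha> I \<and> left_connected H \<sigma> \<alpha> r I}"
      then obtain S where "covered_map H \<sigma> \<alpha> r S" "Delta H \<sigma> \<alpha> r S = I"
        using delta_surj by blast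
      then show "I \<in> Delta H \<sigma> \<alpha> r ` {S. covered_map H \<sigma> \<alpha> r S}" by blast
    qed
  qed
qed

end
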